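(* Let $\Omega\subseteq\mathbb{R}^n$. If $\varphi\in\Phi_{\mathrm w}(\Omega)$ satisfies condition (A2), then so does its conjugate $\varphi^*$.
   Context: A function $f:[0,\infty)\to[0,\infty]$ is $a$-almost increasing ($a\ge1$) if $f(s)\le a f(t)$ for all $s\le t$. A function $\varphi:\Omega\times[0,\infty)\to[0,\infty]$ is a weak $\Phi$-function, $\varphi\in\Phi_{\mathrm w}(\Omega)$, if for a.e. $x\in\Omega$: $x\mapsto\varphi(x,|f(x)|)$ is measurable for every measurable $f:\Omega\to\mathbb{R}$; $t\mapsto\varphi(x,t)$ is increasing (non-decreasing); $\varphi(x,0)=\lim_{t\to0^+}\varphi(x,t)=0$ and $\lim_{t\to\infty}\varphi(x,t)=\infty$; and $t\mapsto\varphi(x,t)/t$ is $a$-almost increasing on $(0,\infty)$ with $a\ge1$ independent of $x$. The conjugate is $\varphi^*(x,t):=\sup\{st-\varphi(x,s):s\ge0\}$. For any $\psi:\Omega\times[0,\infty)\to[0,\infty]$ the left-inverse is $\psi^{-1}(x,\tau):=\inf\{t\ge0:\psi(x,t)\ge\tau\}$. Condition (A2) for $\psi$: for every $\sigma>0$ there exist $\beta\in(0,1]$ and $h\in L^1(\Omega)\cap L^\infty(\Omega)$, $h\ge0$, such that for a.e. $x,y\in\Omega$, $\beta\psi^{-1}(x,\tau)\le\psi^{-1}(y,\tau+h(x)+h(y))$ for all $\tau\in[0,\sigma]$. *)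

theory Defs
  imports "HOL-Analysis.Analysis"
begin

text \<open>Generalized Orlicz functions on \<Omega> \<subseteq> R^n are modelled as
  functions \<open>\<phi> :: 'a \<Rightarrow> real \<Rightarrow> ereal\<close>, 'a a Euclidean space; only arguments
  x in \<Omega> and t \<ge> 0 are relevant.  "a.e." refers to Lebesgue measure on \<Omega>.\<close>

definition almost_increasing_on :: "real set \<Rightarrow> real \<Rightarrow> (real \<Rightarrow> ereal) \<Rightarrow> bool" where
  "almost_increasing_on I a f \<longleftrightarrow>
     (\<forall>s\<in>I. \<forall>t\<in>I. s \<le> t \<longrightarrow> f s \<le> ereal a * f t)"

definition weak_Phi :: "'a::euclidean_space set \<Rightarrow> ('a \<Rightarrow> real \<Rightarrow> ereal) \<Rightarrow> bool" where
  "weak_Phi \<Omega> \<phi> \<longleftrightarrow>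
     (\<forall>x\<in>\<Omega>. \<forall>t\<ge>0. 0 \<le> \<phi> x t) \<and>
     (\<forall>f \<in> borel_measurable (lebesgue_on \<Omega>).
        (\<lambda>x. \<phi> x \<bar>f x\<bar>) \<in> borel_measurable (lebesgue_on \<Omega>)) \<and>
     (\<exists>a\<ge>1. AE x in lebesgue_on \<Omega>.
        mono_on {0..} (\<phi> x) \<and>
        \<phi> x 0 = 0 \<and> (\<phi> x \<longlongrightarrow> 0) (at_right 0) \<and>
        (\<phi> x \<longlongrightarrow> \<infinity>) at_top \<and>
        almost_increasing_on {0<..} a (\<lambda>t. \<phi> x t / ereal t))"

definition conjugate :: "('a \<Rightarrow> real \<Rightarrow> ereal) \<Rightarrow> 'a \<Rightarrow> real \<Rightarrow> ereal" where
  "conjugate \<phi> x t = (SUP s\<in>{0..}. ereal (s * t) - \<phi> x s)"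

text \<open>Left-inverse: \<open>\<psi>\<^sup>-\<^sup>1(x,\<tau>) = inf {t \<ge> 0 : \<psi>(x,t) \<ge> \<tau>}\<close> (inf of empty set = \<infinity>).\<close>
definition left_inv :: "('a \<Rightarrow> real \<Rightarrow> ereal) \<Rightarrow> 'a \<Rightarrow> real \<Rightarrow> ereal" where
  "left_inv \<psi> x \<tau> = Inf (ereal ` {t. 0 \<le> t \<and> ereal \<tau> \<le> \<psi> x t})"

definition cond_A2 :: "'a::euclidean_space set \<Rightarrow> ('a \<Rightarrow> real \<Rightarrow> ereal) \<Rightarrow> bool" where
  "cond_A2 \<Omega> \<psi> \<longleftrightarrow>
     (\<forall>\<sigma>>0. \<exists>(\<beta>::real) (h::'a \<Rightarrow> real). 0 < \<beta> \<and> \<beta> \<le> 1 \<and>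
        integrable (lebesgue_on \<Omega>) h \<and>
        (\<exists>M. AE x in lebesgue_on \<Omega>. \<bar>h x\<bar> \<le> M) \<and>
        (AE x in lebesgue_on \<Omega>. 0 \<le> h x) \<and>
        (AE x in lebesgue_on \<Omega>. AE y in lebesgue_on \<Omega>.
           \<forall>\<tau>\<in>{0..\<sigma>}. ereal \<beta> * left_inv \<psi> x \<tau> \<le> left_inv \<psi> y (\<tau> + h x + h y)))"

end

theory Submission
  imports Defs
begin

definition good :: "real \<Rightarrow> (real \<Rightarrow> ereal) \<Rightarrow> bool" where
 "good a f \<longleftrightarrow> 1 \<le> a \<and> (\<forall>t\<ge>0. 0 \<le> f t) \<and> mono_on {0..} f \<and> f 0 = 0 \<and>
    (f \<longlongrightarrow> 0) (at_right 0) \<and> (f \<longlongrightarrow> \<infinity>) at_top \<and>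
    almost_increasing_on {0<..} a (\<lambda>t. f t / ereal t)"

definition Linv :: "(real \<Rightarrow> ereal) \<Rightarrow> real \<Rightarrow> ereal" where
  "Linv f \<tau> = Inf (ereal ` {t. 0 \<le> t \<and> ereal \<tau> \<le> f t})"

definition cj :: "(real \<Rightarrow> ereal) \<Rightarrow> real \<Rightarrow> ereal" where
  "cj f t = (SUP s\<in>{0..}. ereal (s * t) - f s)"

lemma left_inv_Linv: "left_inv \<psi> x \<tau> = Linv (\<psi> x) \<tau>"
  by (simp add: left_inv_def Linv_def)

lemma conj_cj: "conjugate \<phi> x = cj (\<phi> x)"
  by (simp add: conjugate_def cj_def fun_eq_iff)

lemma Linv_nonneg: "0 \<le> Linv f \<tau>"
  unfolding Linv_def by (rule Inf_greatest) auto

lemma Linv_le: "0 \<le> t \<Longrightarrow> ereal \<tau> \<le> f t \<Longrightarrow> Linv f \<tau> \<le> ereal t"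
  unfolding Linv_def by (rule Inf_lower) auto

lemma Linv_mono: "\<tau>1 \<le> \<tau>2 \<Longrightarrow> Linv f \<tau>1 \<le> Linv f \<tau>2"
proof -
  assume "\<tau>1 \<le> \<tau>2"
  hence "{t. 0 \<le> t \<and> ereal \<tau>2 \<le> f t} \<subseteq> {t. 0 \<le> t \<and> ereal \<tau>1 \<le> f t}"
    by (auto intro: order_trans[of "ereal \<tau>1" "ereal \<tau>2"])
  thus ?thesis unfolding Linv_def by (intro Inf_superset_mono image_mono)
qed

lemma Linv_F3: "0 \<le> t \<Longrightarrow> ereal t < Linv f \<tau> \<Longrightarrow> f t < ereal \<tau>"
  using Linv_le[of t \<tau> f] by (meson not_le)

lemma Linv_F4:
  assumes "mono_on {0..} f" "0 \<le> t" "Linv f \<tau> < ereal t"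
  shows "ereal \<tau> \<le> f t"
proof -
  from assms(3) obtain y where y: "0 \<le> y" "ereal \<tau> \<le> f y" "ereal y < ereal t"
    unfolding Linv_def Inf_less_iff by auto
  have "f y \<le> f t" using assms(1) y assms(2) by (auto intro: mono_onD)
  then show ?thesis using y by simp
qed

lemma good_F5:
  assumes g: "good a f" and st: "0 < s" "s \<le> t" and c: "ereal c \<le> f s"
  shows "ereal (c * t / (a * s)) \<le> f t"
proof -
  have a: "1 \<le> a" and nn: "\<And>t. t \<ge> 0 \<Longrightarrow> 0 \<le> f t"
    and ai: "f s / ereal s \<le> ereal a * (f t / ereal t)"
    using g st unfolding good_def almost_increasing_on_def by auto
  show ?thesis
  proof (cases "f t")
    case PInf then show ?thesis by simp
  next
    case MInf then show ?thesis using nn[of t] st by simp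
  next
    case (real r)
    show ?thesis
    proof (cases "f s")
      case PInf
      then show ?thesis using ai real st by simp
    next
      case MInf then show ?thesis using nn[of s] st by simp
    next
      case (real q)
      have "q / s \<le> a * (r / t)" using ai \<open>f t = ereal r\<close> real st by simp
      hence "q * t \<le> a * r * s" using st by (simp add: field_simps)
      moreover have "c \<le> q" using c real by simp
      ultimately have "c * t \<le> a * r * s" using st by (smt (verit) mult_right_mono)
      hence "c * t / (a * s) \<le> r" using st a by (simp add: field_simps)
      then show ?thesis using \<open>f t = ereal r\<close> by simp
    qed
  qed
qed

lemma good_Lfin:
  assumes g: "good a f" and tau: "0 < \<tau>"
  shows "\<exists>u>0. Linv f \<tau> = ereal u"
proof -
  have top: "(f \<longlongrightarrow> \<infinity>) at_top" and z: "(f \<longlongrightarrow> 0) (at_right 0)" and f0: "f 0 = 0"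
    using g unfolding good_def by auto
  have "eventually (\<lambda>t. ereal \<tau> < f t) at_top"
    by (rule order_tendstoD(1)[OF top]) simp
  then obtain N where N: "\<And>t. t \<ge> N \<Longrightarrow> ereal \<tau> < f t"
    unfolding eventually_at_top_linorder by auto
  have up: "Linv f \<tau> \<le> ereal (max N 0)"
    by (rule Linv_le) (use N[of "max N 0"] in auto)
  have "eventually (\<lambda>t. f t < ereal \<tau>) (at_right 0)"
    by (rule order_tendstoD(2)[OF z]) (simp add: tau)
  then obtain b where b: "b > 0" "\<And>y. y > 0 \<Longrightarrow> y < b \<Longrightarrow> f y < ereal \<tau>"
    unfolding eventually_at_right[OF zero_less_one] by auto
  have low: "ereal b \<le> Linv f \<tau>"
    unfolding Linv_def
  proof (rule Inf_greatest, clarify)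
    fix t assume t: "0 \<le> t" "ereal \<tau> \<le> f t"
    show "ereal b \<le> ereal t"
    proof (rule ccontr)
      assume "\<not> ereal b \<le> ereal t"
      hence "t < b" by simp
      show False
      proof (cases "t = 0")
        case True then show False using t f0 tau by simp
      next
        case False then show False using b(2)[of t] t \<open>t < b\<close> by simp
      qed
    qed
  qed
  show ?thesis
  proof (cases "Linv f \<tau>")
    case (real r) then show ?thesis using low b by (intro exI[of _ r]) auto
  qed (use up low in \<open>auto simp: max_def split: if_splits\<close>)
qed

lemma good_D:
  assumes g: "good a f" and s: "0 < s1" "s1 \<le> s2" and u: "Linv f s1 = ereal u" "0 < u"
  shows "Linv f s2 \<le> ereal (2 * a * s2 / s1 * u)"
proof -
  have a: "1 \<le> a" and mo: "mono_on {0..} f" using g unfolding good_def by auto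
  have sa: "s1 \<le> a * s2" using mult_right_mono[of 1 a s2] s a by linarith
  have "ereal s1 \<le> f (2 * u)"
    by (rule Linv_F4[OF mo]) (use u in auto)
  from good_F5[OF g _ _ this, of "a * s2 / s1 * (2 * u)"] sa
  have "ereal (s1 * (a * s2 / s1 * (2 * u)) / (a * (2 * u))) \<le> f (a * s2 / s1 * (2 * u))"
    using u s a by (simp add: field_simps)
  moreover have "s1 * (a * s2 / s1 * (2 * u)) / (a * (2 * u)) = s2" using u s a by (simp add: field_simps)
  ultimately have "ereal s2 \<le> f (a * s2 / s1 * (2 * u))" by simp
  hence "Linv f s2 \<le> ereal (a * s2 / s1 * (2 * u))"
    by (rule Linv_le[rotated]) (use u s a in simp)
  thus ?thesis by (simp add: field_simps)
qed

lemma good_C1: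
  assumes g: "good a f" and tau: "0 < \<tau>" and u: "Linv f \<tau> = ereal u" "0 < u"
  shows "Linv (cj f) \<tau> \<le> ereal (4 * \<tau> / u)"
proof (rule Linv_le)
  show "0 \<le> 4 * \<tau> / u" using tau u by simp
  have nn: "0 \<le> f (u/2)" using g u unfolding good_def by auto
  have lt: "f (u/2) < ereal \<tau>" by (rule Linv_F3) (use u in auto)
  then obtain q where q: "f (u/2) = ereal q" "q < \<tau>" using nn by (cases "f (u/2)") auto
  have "ereal (u/2 * (4 * \<tau> / u)) - f (u/2) \<le> cj f (4 * \<tau> / u)"
    unfolding cj_def by (rule SUP_upper) (use u in auto)
  moreover have "u/2 * (4 * \<tau> / u) = 2 * \<tau>" using u by (simp add: field_simps)
  ultimately have "ereal (2 * \<tau> - q) \<le> cj f (4 * \<tau> / u)" using q by simp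
  thus "ereal \<tau> \<le> cj f (4 * \<tau> / u)" using q by (smt (verit) ereal_less_eq(3) order_trans)
qed

lemma good_C2:
  assumes g: "good a f" and tau: "0 < \<tau>" and w: "0 < w" "Linv f \<tau> < ereal w"
  shows "ereal (\<tau> / (2 * a * w)) \<le> Linv (cj f) \<tau>"
proof -
  have a: "1 \<le> a" and mo: "mono_on {0..} f" and nn: "\<And>t. t \<ge> 0 \<Longrightarrow> 0 \<le> f t"
    using g unfolding good_def by auto
  have fw: "ereal \<tau> \<le> f w" by (rule Linv_F4[OF mo]) (use w in auto)
  have bound: "cj f t \<le> ereal (w * t)" if t: "0 \<le> t" "t \<le> \<tau> / (a * w)" for t
    unfolding cj_def
  proof (rule SUP_least)
    fix s :: real assume "s \<in> {0..}"
    hence s: "0 \<le> s" by simp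
    show "ereal (s * t) - f s \<le> ereal (w * t)"
    proof (cases "s < w")
      case True
      have "s * t \<le> w * t" using True t by (simp add: mult_right_mono)
      then show ?thesis using nn[OF s] by (cases "f s") auto
    next
      case False
      have fs: "ereal (\<tau> * s / (a * w)) \<le> f s"
        by (rule good_F5[OF g _ _ fw]) (use w False in auto)
      have "s * t \<le> s * (\<tau> / (a * w))" using t s by (intro mult_left_mono) auto
      hence "s * t - \<tau> * s / (a * w) \<le> 0" by (simp add: mult.commute)
      moreover have "0 \<le> w * t" using w t by simp
      ultimately show ?thesis using fs by (cases "f s") auto
    qed
  qed
  show ?thesis
    unfolding Linv_def
  proof (rule Inf_greatest, clarify)
    fix t assume t: "0 \<le> t" "ereal \<tau> \<le> cj f t"
    show "ereal (\<tau> / (2 * a * w)) \<le> ereal t"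
    proof (rule ccontr)
      assume "\<not> ?thesis"
      hence lt: "t < \<tau> / (2 * a * w)" by simp
      have "\<tau> / (2 * a * w) \<le> \<tau> / (a * w)" using tau a w by (simp add: field_simps)
      hence "cj f t \<le> ereal (w * t)" using bound t lt by simp
      moreover have "w * t < \<tau>"
      proof -
        have "w * t < w * (\<tau> / (2 * a * w))" by (rule mult_strict_left_mono[OF lt w(1)])
        also have "\<dots> = \<tau> / (2 * a)" using w by simp
        also have "\<dots> \<le> \<tau>" using a tau by (simp add: field_simps)
        finally show ?thesis .
      qed
      ultimately show False using t by (smt (verit) ereal_less_eq(3) order_trans)
    qed
  qed
qed

lemma pointwise:
  assumes gx: "good a fx" and gy: "good a fy" and H: "0 \<le> H" and tau: "0 < \<tau>"
    and bnd: "2 * \<tau> + H \<le> S" and beta: "0 < \<beta>" "\<beta> \<le> 1"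
    and Q: "\<forall>s\<in>\<rat>. \<forall>r\<in>\<rat>. 0 \<le> s \<longrightarrow> s \<le> S \<longrightarrow> H \<le> r \<longrightarrow>
              ereal \<beta> * Linv fy s \<le> Linv fx (s + r)"
  shows "ereal (\<beta> / (96 * a\<^sup>2)) * Linv (cj fx) \<tau> \<le> Linv (cj fy) (\<tau> + H)"
proof -
  have a: "1 \<le> a" using gx unfolding good_def by auto
  define \<tau>' where "\<tau>' = \<tau> + H"
  have t': "0 < \<tau>'" using tau H by (simp add: \<tau>'_def)
  obtain u where u: "0 < u" "Linv fx \<tau> = ereal u" using good_Lfin[OF gx tau] by auto
  obtain v where v: "0 < v" "Linv fy \<tau>' = ereal v" using good_Lfin[OF gy t'] by auto
  obtain s where s: "s \<in> \<rat>" "\<tau>' < s" "s < \<tau>' + \<tau>" using Rats_dense_in_real[of \<tau>' "\<tau>' + \<tau>"] tau by auto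
  obtain r where r: "r \<in> \<rat>" "H < r" "r < H + \<tau>" using Rats_dense_in_real[of H "H + \<tau>"] tau by auto
  have sr: "s + r \<le> 3 * \<tau>'" using s r H by (simp add: \<tau>'_def)
  have "ereal \<beta> * Linv fy \<tau>' \<le> ereal \<beta> * Linv fy s"
    by (rule ereal_mult_left_mono) (use Linv_mono s beta in \<open>auto intro: less_imp_le\<close>)
  also have "\<dots> \<le> Linv fx (s + r)"
    using Q s r t' bnd by (auto simp: \<tau>'_def)
  also have "\<dots> \<le> Linv fx (3 * \<tau>')" by (rule Linv_mono[OF sr])
  also have "\<dots> \<le> ereal (2 * a * (3 * \<tau>') / \<tau> * u)"
    by (rule good_D[OF gx tau _ u(2) u(1)]) (use H tau in \<open>simp add: \<tau>'_def\<close>)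
  finally have "\<beta> * v \<le> 2 * a * (3 * \<tau>') / \<tau> * u" using v by simp
  define K0 where "K0 = 6 * a * \<tau>' * u / \<tau>"
  have K0: "0 < K0" using a t' u tau by (simp add: K0_def)
  have "\<beta> * v \<le> K0" using \<open>\<beta> * v \<le> _\<close> by (simp add: K0_def)
  hence vK: "v \<le> K0 / \<beta>" using beta by (simp add: field_simps)
  define w where "w = 2 * K0 / \<beta>"
  have w: "0 < w" "Linv fy \<tau>' < ereal w" using vK K0 beta v by (auto simp: w_def field_simps)
  have C2: "ereal (\<tau>' / (2 * a * w)) \<le> Linv (cj fy) \<tau>'" by (rule good_C2[OF gy t' w])
  have C1: "Linv (cj fx) \<tau> \<le> ereal (4 * \<tau> / u)" by (rule good_C1[OF gx tau u(2) u(1)])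
  have "ereal (\<beta> / (96 * a\<^sup>2)) * Linv (cj fx) \<tau> \<le> ereal (\<beta> / (96 * a\<^sup>2)) * ereal (4 * \<tau> / u)"
    by (rule ereal_mult_left_mono[OF C1]) (use beta in simp)
  also have "\<dots> = ereal (\<tau>' / (2 * a * w))"
    using a t' u tau beta by (simp add: w_def K0_def field_simps power2_eq_square)
  also note C2
  finally show ?thesis by (simp add: \<tau>'_def)
qed


lemma emeasure_restrict_space_le:
  assumes "X \<subseteq> B" "B \<in> sets M"
  shows "emeasure (restrict_space M \<Omega>) X \<le> emeasure M B"
proof -
  have "emeasure (restrict_space M \<Omega>) X \<le> emeasure M X"
    unfolding restrict_space_def emeasure_measure_of_conv by auto
  also have "\<dots> \<le> emeasure M B" by (rule emeasure_mono[OF assms])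
  finally show ?thesis .
qed

lemma sf_lebesgue_on: "sigma_finite_measure (lebesgue_on (\<Omega>::'a::euclidean_space set))"
proof -
  from lborel.sigma_finite_countable obtain C :: "'a set set"
    where C: "countable C" "C \<subseteq> sets lborel" "(\<Union>C) = space lborel" "\<forall>a\<in>C. emeasure lborel a \<noteq> \<infinity>"
    by blast
  let ?C = "(\<inter>) \<Omega> ` C"
  have "countable ?C" using C(1) by simp
  moreover have "?C \<subseteq> sets (lebesgue_on \<Omega>)"
  proof
    fix b assume "b \<in> ?C"
    then obtain a where a: "a \<in> C" "b = \<Omega> \<inter> a" by blast
    have "a \<in> sets lebesgue" using C(2) a(1) by blast
    thus "b \<in> sets (lebesgue_on \<Omega>)" unfolding sets_restrict_space using a(2) by blast
  qed
  moreover have "(\<Union>?C) = space (lebesgue_on \<Omega>)"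
  proof -
    have "\<Union>?C = \<Omega> \<inter> \<Union>C" by blast
    also have "\<dots> = \<Omega>" using C(3) by simp
    finally show ?thesis by (simp add: space_restrict_space)
  qed
  moreover have "emeasure (lebesgue_on \<Omega>) a \<noteq> \<infinity>" if "a \<in> ?C" for a
  proof -
    from that obtain a' where a': "a = \<Omega> \<inter> a'" "a' \<in> C" by auto
    have "emeasure (lebesgue_on \<Omega>) a \<le> emeasure lebesgue a'"
      by (rule emeasure_restrict_space_le) (use a' C in auto)
    also have "\<dots> = emeasure lborel a'" using a' C by auto
    also have "\<dots> < \<infinity>" using C(4) a' top.not_eq_extremum by auto
    finally show ?thesis by simp
  qed
  ultimately show ?thesis by (meson sigma_finite_measure_def)
qed

lemma AE_swap:
  fixes \<Omega> :: "'a::euclidean_space set"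
  assumes P: "Measurable.pred (lebesgue_on \<Omega> \<Otimes>\<^sub>M lebesgue_on \<Omega>) (\<lambda>p. P (fst p) (snd p))"
    and ae: "AE x in lebesgue_on \<Omega>. AE y in lebesgue_on \<Omega>. P x y"
  shows "AE y in lebesgue_on \<Omega>. AE x in lebesgue_on \<Omega>. P x y"
proof -
  interpret sigma_finite_measure "lebesgue_on \<Omega>" by (rule sf_lebesgue_on)
  interpret pair_sigma_finite "lebesgue_on \<Omega>" "lebesgue_on \<Omega>" ..
  show ?thesis using AE_commute[of P] P ae unfolding pred_def by simp
qed

definition Lq :: "(real \<Rightarrow> ereal) \<Rightarrow> real \<Rightarrow> ereal" where
  "Lq f \<tau> = (INF t\<in>{t\<in>\<rat>. 0 \<le> t}. if ereal \<tau> \<le> f t then ereal t else \<infinity>)"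

lemma Lq_eq:
  assumes mo: "mono_on {0..} f"
  shows "Lq f \<tau> = Linv f \<tau>"
proof (rule antisym)
  show "Linv f \<tau> \<le> Lq f \<tau>"
    unfolding Lq_def by (rule INF_greatest) (auto intro: Linv_le)
  show "Lq f \<tau> \<le> Linv f \<tau>"
    unfolding Linv_def
  proof (rule Inf_greatest, clarify)
    fix t assume t: "0 \<le> t" "ereal \<tau> \<le> f t"
    have q: "Lq f \<tau> \<le> ereal q" if "q \<in> \<rat>" "t < q" for q
    proof -
      have "ereal \<tau> \<le> f q" using t that mono_onD[OF mo, of t q] by (auto intro: order_trans)
      hence "(if ereal \<tau> \<le> f q then ereal q else \<infinity>) = ereal q" by simp
      moreover have "Lq f \<tau> \<le> (if ereal \<tau> \<le> f q then ereal q else \<infinity>)"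
        unfolding Lq_def by (rule INF_lower) (use that t in auto)
      ultimately show ?thesis by simp
    qed
    show "Lq f \<tau> \<le> ereal t"
    proof (rule ccontr)
      assume "\<not> ?thesis"
      hence "ereal t < Lq f \<tau>" by simp
      then obtain z where z: "ereal t < ereal z" "ereal z < Lq f \<tau>" using ereal_dense2 by blast
      obtain q where "q \<in> \<rat>" "t < q" "q < z" using Rats_dense_in_real[of t z] z by auto
      hence "Lq f \<tau> \<le> ereal q" "ereal q < ereal z" using q[of q] by auto
      hence "Lq f \<tau> < ereal z" by (rule order.strict_trans1)
      with z(2) show False by simp
    qed
  qed
qed

lemma Lq_meas:
  fixes \<phi> :: "'a \<Rightarrow> real \<Rightarrow> ereal" and \<tau> :: real
  assumes m: "\<And>t. 0 \<le> t \<Longrightarrow> (\<lambda>x. \<phi> x t) \<in> borel_measurable M"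
  shows "(\<lambda>x. Lq (\<phi> x) \<tau>) \<in> borel_measurable M"
  unfolding Lq_def
proof (rule borel_measurable_INF)
  show "countable {t \<in> \<rat>. 0 \<le> t}" by (rule countable_subset[OF _ countable_rat]) auto
  fix t :: real assume "t \<in> {t \<in> \<rat>. 0 \<le> t}"
  hence [measurable]: "(\<lambda>x. \<phi> x t) \<in> borel_measurable M" using m by auto
  show "(\<lambda>x. if ereal \<tau> \<le> \<phi> x t then ereal t else \<infinity>) \<in> borel_measurable M"
    by measurable
qed

lemma Q_pred:
  fixes \<Omega> :: "'a::euclidean_space set" and \<phi> :: "'a \<Rightarrow> real \<Rightarrow> ereal" and h :: "'a \<Rightarrow> real"
    and r s \<beta> :: real
  assumes m: "\<And>t. 0 \<le> t \<Longrightarrow> (\<lambda>x. \<phi> x t) \<in> borel_measurable (lebesgue_on \<Omega>)"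
    and h: "h \<in> borel_measurable (lebesgue_on \<Omega>)"
  shows "Measurable.pred (lebesgue_on \<Omega> \<Otimes>\<^sub>M lebesgue_on \<Omega>)
     (\<lambda>p. h (fst p) + h (snd p) \<le> r \<longrightarrow> ereal \<beta> * Lq (\<phi> (fst p)) s \<le> Lq (\<phi> (snd p)) (s + r))"
proof -
  note [measurable] = h Lq_meas[OF m, where \<tau>=s] Lq_meas[OF m, where \<tau>="s + r"]
  show ?thesis by measurable
qed


lemma ext_A2:
  assumes g: "good a f" and b1: "0 < \<beta>1" "\<beta>1 \<le> 1" and S: "1 \<le> S"
    and A: "\<forall>\<tau>\<in>{0..1}. ereal \<beta>1 * Linv f \<tau> \<le> Linv g (\<tau> + H)"
    and s: "0 \<le> s" "s \<le> S"
  shows "ereal (\<beta>1 / (2 * a * S)) * Linv f s \<le> Linv g (s + H)"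
proof -
  have a: "1 \<le> a" using g unfolding good_def by auto
  have c: "\<beta>1 / (2 * a * S) \<le> \<beta>1"
  proof -
    have "1 \<le> 2 * a * S" using a S mult_mono[of 1 a 1 S] by linarith
    thus ?thesis using b1 by (simp add: divide_le_eq_1 field_simps mult_le_cancel_left1)
  qed
  have c0: "0 \<le> \<beta>1 / (2 * a * S)" using a S b1 by simp
  show ?thesis
  proof (cases "s \<le> 1")
    case True
    have "ereal (\<beta>1 / (2 * a * S)) * Linv f s \<le> ereal \<beta>1 * Linv f s"
      by (rule ereal_mult_right_mono) (use c Linv_nonneg in auto)
    also have "\<dots> \<le> Linv g (s + H)" using A s True by auto
    finally show ?thesis .
  next
    case False
    obtain u where u: "0 < u" "Linv f 1 = ereal u" using good_Lfin[OF g, of 1] by auto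
    have D: "Linv f s \<le> ereal (2 * a * s / 1 * u)"
      by (rule good_D[OF g _ _ u(2) u(1)]) (use False in auto)
    have "ereal (\<beta>1 / (2 * a * S)) * Linv f s \<le> ereal (\<beta>1 / (2 * a * S)) * ereal (2 * a * s / 1 * u)"
      by (rule ereal_mult_left_mono[OF D]) (use c0 in simp)
    also have "\<dots> = ereal (\<beta>1 * u * (s / S))" using a S by (simp add: field_simps)
    also have "\<dots> \<le> ereal (\<beta>1 * u)"
    proof -
      have "s / S \<le> 1" using s S by simp
      hence "\<beta>1 * u * (s / S) \<le> \<beta>1 * u * 1" using b1 u by (intro mult_left_mono) auto
      thus ?thesis by simp
    qed
    also have "\<dots> = ereal \<beta>1 * Linv f 1" using u by simp
    also have "\<dots> \<le> Linv g (1 + H)" using A by auto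
    also have "\<dots> \<le> Linv g (s + H)" by (rule Linv_mono) (use False in auto)
    finally show ?thesis .
  qed
qed

lemma cj_zero:
  assumes g: "good a f"
  shows "Linv (cj f) 0 = 0"
proof (rule antisym)
  have "ereal (0 * 0) - f 0 \<le> cj f 0" unfolding cj_def by (rule SUP_upper) auto
  hence "ereal 0 \<le> cj f 0" using g unfolding good_def by simp
  thus "Linv (cj f) 0 \<le> 0" using Linv_le[of 0 0 "cj f"] by (simp add: zero_ereal_def)
qed (rule Linv_nonneg)

theorem lemma2p4:
  fixes \<Omega> :: "'a::euclidean_space set" and \<phi> :: "'a \<Rightarrow> real \<Rightarrow> ereal"
  assumes "weak_Phi \<Omega> \<phi>" and "cond_A2 \<Omega> \<phi>"
  shows "cond_A2 \<Omega> (conjugate \<phi>)"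
proof -
  let ?M = "lebesgue_on \<Omega>"
  from assms(1) have nn: "\<And>x t. x \<in> \<Omega> \<Longrightarrow> t \<ge> 0 \<Longrightarrow> 0 \<le> \<phi> x t"
    and meas: "\<And>f. f \<in> borel_measurable ?M \<Longrightarrow> (\<lambda>x. \<phi> x \<bar>f x\<bar>) \<in> borel_measurable ?M"
    unfolding weak_Phi_def by auto
  from assms(1) obtain a where a: "1 \<le> a" and aeg0: "AE x in ?M.
        mono_on {0..} (\<phi> x) \<and>
        \<phi> x 0 = 0 \<and> (\<phi> x \<longlongrightarrow> 0) (at_right 0) \<and>
        (\<phi> x \<longlongrightarrow> \<infinity>) at_top \<and>
        almost_increasing_on {0<..} a (\<lambda>t. \<phi> x t / ereal t)"
    unfolding weak_Phi_def by blast
  have G: "AE x in ?M. good a (\<phi> x)"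
    using aeg0 AE_space
  proof eventually_elim
    case (elim x)
    then show ?case unfolding good_def using nn[of x] a by (simp add: space_restrict_space)
  qed
  have m: "(\<lambda>x. \<phi> x t) \<in> borel_measurable ?M" if "0 \<le> t" for t
    using meas[of "\<lambda>_. t"] that by simp
  from assms(2) obtain \<beta>1 h where b1: "0 < \<beta>1" "\<beta>1 \<le> 1" and hint: "integrable ?M h"
    and hM: "\<exists>M. AE x in ?M. \<bar>h x\<bar> \<le> M" and h0: "AE x in ?M. 0 \<le> h x"
    and A1: "AE x in ?M. AE y in ?M. \<forall>\<tau>\<in>{0..1}. ereal \<beta>1 * left_inv \<phi> x \<tau> \<le> left_inv \<phi> y (\<tau> + h x + h y)"
    using assms(2)[unfolded cond_A2_def, rule_format, OF zero_less_one] by blast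
  from hM obtain M0 where M0: "AE x in ?M. \<bar>h x\<bar> \<le> M0" by blast
  define Mb where "Mb = max M0 0"
  have HB: "AE x in ?M. 0 \<le> h x \<and> h x \<le> Mb" using M0 h0 by eventually_elim (auto simp: Mb_def)
  have hmeas: "h \<in> borel_measurable ?M" using hint by (rule borel_measurable_integrable)
  show ?thesis
    unfolding cond_A2_def
  proof (intro allI impI)
    fix \<sigma> :: real assume sig: "0 < \<sigma>"
    define S where "S = 2 * \<sigma> + 2 * Mb + 1"
    have S1: "1 \<le> S" using sig by (simp add: S_def Mb_def)
    define \<beta> where "\<beta> = \<beta>1 / (2 * a * S)"
    have bpos: "0 < \<beta>" using b1 a S1 by (simp add: \<beta>_def)
    have ble: "\<beta> \<le> 1"
    proof -
      have "1 \<le> 2 * a * S" using a S1 mult_mono[of 1 a 1 S] by linarith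
      thus ?thesis using b1 by (simp add: \<beta>_def field_simps)
    qed
    define \<beta>' where "\<beta>' = \<beta> / (96 * a\<^sup>2)"
    have b'pos: "0 < \<beta>'" using bpos a by (simp add: \<beta>'_def)
    have b'le: "\<beta>' \<le> 1"
    proof -
      have "1 \<le> a\<^sup>2" using a by (simp add: one_le_power)
      hence "1 \<le> 96 * a\<^sup>2" by linarith
      hence "\<beta> / (96 * a\<^sup>2) \<le> \<beta> / 1" using bpos by (intro divide_left_mono) auto
      thus ?thesis using ble by (simp add: \<beta>'_def)
    qed
    have E: "AE x in ?M. AE y in ?M. good a (\<phi> x) \<and> good a (\<phi> y) \<and>
               (\<forall>s\<in>{0..S}. ereal \<beta> * Linv (\<phi> x) s \<le> Linv (\<phi> y) (s + (h x + h y)))"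
      using A1 G
    proof eventually_elim
      case (elim x)
      show ?case using elim(1) G
      proof eventually_elim
        case (elim y)
        have "\<forall>\<tau>\<in>{0..1}. ereal \<beta>1 * Linv (\<phi> x) \<tau> \<le> Linv (\<phi> y) (\<tau> + (h x + h y))"
          using elim(1) by (simp add: left_inv_Linv add.assoc)
        hence A1': "\<forall>\<tau>\<in>{0..1}. ereal \<beta>1 * Linv (\<phi> x) \<tau> \<le> Linv (\<phi> y) (\<tau> + (h x + h y))" .
        have "\<forall>s\<in>{0..S}. ereal \<beta> * Linv (\<phi> x) s \<le> Linv (\<phi> y) (s + (h x + h y))"
        proof
          fix s assume "s \<in> {0..S}"
          then show "ereal \<beta> * Linv (\<phi> x) s \<le> Linv (\<phi> y) (s + (h x + h y))"
            unfolding \<beta>_def using ext_A2[OF \<open>good a (\<phi> x)\<close> b1 S1 A1', of s] by simp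
        qed
        then show ?case using elim(2) \<open>good a (\<phi> x)\<close> by blast
      qed
    qed
    define I where "I = {s\<in>\<rat>. 0 \<le> s \<and> s \<le> S} \<times> (\<rat>::real set)"
    have cI: "countable I" unfolding I_def
      by (intro countable_SIGMA countable_subset[OF _ countable_rat]) auto
    define Q where "Q = (\<lambda>(i::real\<times>real) x y. h x + h y \<le> snd i \<longrightarrow>
                          ereal \<beta> * Lq (\<phi> x) (fst i) \<le> Lq (\<phi> y) (fst i + snd i))"
    have Qi: "AE y in ?M. AE x in ?M. Q i x y" if "i \<in> I" for i
    proof (rule AE_swap)
      obtain s r where i: "i = (s, r)" by force
      show "Measurable.pred (?M \<Otimes>\<^sub>M ?M) (\<lambda>p. Q i (fst p) (snd p))"
        unfolding Q_def i using Q_pred[OF m hmeas, where r=r and \<beta>=\<beta> and s=s] by simp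
      show "AE x in ?M. AE y in ?M. Q i x y"
        using E
      proof eventually_elim
        case (elim x)
        show ?case using elim
        proof eventually_elim
          case (elim y)
          have mx: "mono_on {0..} (\<phi> x)" and my: "mono_on {0..} (\<phi> y)"
            using elim unfolding good_def by auto
          show ?case unfolding Q_def i fst_conv snd_conv
          proof
            assume hr: "h x + h y \<le> r"
            have s: "0 \<le> s" "s \<le> S" using that i by (auto simp: I_def)
            have "ereal \<beta> * Linv (\<phi> x) s \<le> Linv (\<phi> y) (s + (h x + h y))" using elim s by auto
            also have "\<dots> \<le> Linv (\<phi> y) (s + r)" by (rule Linv_mono) (use hr in simp)
            finally show "ereal \<beta> * Lq (\<phi> x) s \<le> Lq (\<phi> y) (s + r)"
              by (simp add: Lq_eq[OF mx] Lq_eq[OF my])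
          qed
        qed
      qed
    qed
    have QI: "AE y in ?M. AE x in ?M. \<forall>i\<in>I. Q i x y"
    proof -
      have "AE y in ?M. \<forall>i\<in>I. AE x in ?M. Q i x y" by (rule AE_ball_countable'[OF Qi cI])
      thus ?thesis by eventually_elim (simp add: AE_ball_countable[OF cI])
    qed
    have main: "AE y in ?M. AE x in ?M. \<forall>\<tau>\<in>{0..\<sigma>}.
        ereal \<beta>' * left_inv (conjugate \<phi>) y \<tau> \<le> left_inv (conjugate \<phi>) x (\<tau> + h y + h x)"
      using QI G HB
    proof eventually_elim
      case (elim y)
      show ?case using elim(1) G HB
      proof eventually_elim
        case (elim x)
        show ?case
        proof
          fix \<tau> assume t: "\<tau> \<in> {0..\<sigma>}"
          show "ereal \<beta>' * left_inv (conjugate \<phi>) y \<tau> \<le> left_inv (conjugate \<phi>) x (\<tau> + h y + h x)"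
          proof (cases "\<tau> = 0")
            case True
            then show ?thesis using cj_zero[OF \<open>good a (\<phi> y)\<close>]
              by (simp add: left_inv_Linv conj_cj Linv_nonneg)
          next
            case False
            hence tpos: "0 < \<tau>" using t by simp
            have mx: "mono_on {0..} (\<phi> x)" and my: "mono_on {0..} (\<phi> y)"
              using elim \<open>good a (\<phi> y)\<close> unfolding good_def by auto
            have Qh: "\<forall>s\<in>\<rat>. \<forall>r\<in>\<rat>. 0 \<le> s \<longrightarrow> s \<le> S \<longrightarrow> h y + h x \<le> r \<longrightarrow>
                 ereal \<beta> * Linv (\<phi> x) s \<le> Linv (\<phi> y) (s + r)"
            proof (intro ballI impI)
              fix s r assume "s \<in> \<rat>" "r \<in> \<rat>" "0 \<le> s" "s \<le> S" "h y + h x \<le> r"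
              hence "(s, r) \<in> I" by (simp add: I_def)
              hence "Q (s, r) x y" using elim by auto
              thus "ereal \<beta> * Linv (\<phi> x) s \<le> Linv (\<phi> y) (s + r)"
                using \<open>h y + h x \<le> r\<close> by (simp add: Q_def Lq_eq[OF mx] Lq_eq[OF my] add.commute)
            qed
            have bnd: "2 * \<tau> + (h y + h x) \<le> S" using t elim \<open>0 \<le> h y \<and> h y \<le> Mb\<close> by (simp add: S_def)
            have "ereal (\<beta> / (96 * a\<^sup>2)) * Linv (cj (\<phi> y)) \<tau> \<le> Linv (cj (\<phi> x)) (\<tau> + (h y + h x))"
              by (rule pointwise[OF \<open>good a (\<phi> y)\<close> \<open>good a (\<phi> x)\<close> _ tpos bnd bpos ble Qh])
                 (use elim \<open>0 \<le> h y \<and> h y \<le> Mb\<close> in simp)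
            then show ?thesis by (simp add: left_inv_Linv conj_cj \<beta>'_def add.assoc)
          qed
        qed
      qed
    qed
    show "\<exists>\<beta> h. 0 < \<beta> \<and> \<beta> \<le> 1 \<and> integrable ?M h \<and> (\<exists>M. AE x in ?M. \<bar>h x\<bar> \<le> M) \<and>
        (AE x in ?M. 0 \<le> h x) \<and>
        (AE x in ?M. AE y in ?M. \<forall>\<tau>\<in>{0..\<sigma>}. ereal \<beta> * left_inv (conjugate \<phi>) x \<tau> \<le> left_inv (conjugate \<phi>) y (\<tau> + h x + h y))"
    proof (rule exI[of _ \<beta>'], rule exI[of _ h], intro conjI)
      show "0 < \<beta>'" "\<beta>' \<le> 1" by (fact b'pos, fact b'le)
    qed (fact hint hM h0 main)+
  qed
qed

end
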